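(* Let $T$ be a rhombic alternative tableau of type $X\in B_n^r$ with tiling $\mathcal{T}$, and run the label-passing algorithm on $T$. Suppose that a label $J$ is passed along the line of a west-strip $\mathbf{w}$ eastward out of a tile $\mathbf{t}$ of $\mathbf{w}$, and that no tile of $\mathbf{w}$ to the right of $\mathbf{t}$ contains a $\beta$. Then at the completion of the algorithm, the southeast boundary edge (external vertex) of $\mathbf{w}$ carries the label $\{J_{\max}\}$, where $J_{\max}=\max J$.
   Context: Words and diagrams. For $0\le r\le n$ let $B_n^r$ be the set of words $X\in\{H,L,0\}^n$ with exactly $r$ letters $L$. If $X$ has $k$ letters $H$, $r$ letters $L$ and $\ell$ letters $0$, its rhombic diagram $\Gamma(X)$ is the closed region bounded by two paths of unit steps, using the directions west (horizontal), south (vertical) and southwest (diagonal: a fixed unit vector strictly between west and south), both going from a point $P$ to a point $Q$: the northwest boundary consists of $\ell$ west steps, then $r$ southwest steps, then $k$ south steps; the southeast boundary is obtained by reading $X$ left to right and taking a west step for each $0$, a southwest step for each $L$, a south step for each $H$. A tiling of $\Gamma(X)$ is a tiling by unit rhombi of three kinds: squares (horizontal and vertical edges), tall rhombi (vertical and diagonal edges), short rhombi (horizontal and diagonal edges). A west-strip (resp. north-strip, northwest-strip) is a maximal set of tiles connected through shared vertical (resp. horizontal, diagonal) edges; each runs from an edge of the southeast boundary to an edge of the northwest boundary. Rhombic alternative tableaux. A rhombic alternative tableau (RAT) of type $X$ with tiling $\mathcal{T}$ is a filling of the tiles of $\mathcal{T}$, each tile empty or containing one of $\alpha,\beta,q$,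 where $\alpha$ occurs only in squares and short rhombi and $\beta$ only in squares and tall rhombi, such that: (i) every tile in the same west-strip as a tile containing $\beta$ and to its left is empty; (ii) every tile in the same north-strip as a tile containing $\alpha$ and above it is empty; (iii) every tile not forced to be empty by (i),(ii) contains $\alpha$, $\beta$ or $q$. Label-passing algorithm. A label is a finite set of consecutive integers; for labels $C,D$ write $D\succ C$ if both are nonempty and $\min D=\max C+1$. Given a RAT $T$: through each west-strip draw a line through the midpoints of its vertical edges, through each north-strip a line through midpoints of its horizontal edges, and through each northwest-strip a line through midpoints of its diagonal edges (all passing through the tile centres). For every tile containing $\alpha$ erase the part of its north-strip line above the tile's centre; for every tile containing $\beta$ erase the part of its west-strip line to the left of the tile's centre. This yields a forest of binary trees whose branching vertices are the centres of tiles containing $\alpha$ or $\beta$, whose leaves (external vertices) are the southeast boundary edges and whose roots are northwest boundary edges; roots are red/green/blue according as they lie on a west-/northwest-/north-strip. Add a special trivial green root at $Q$ with one fictitious leaf. Order the roots: red roots from top to bottom, then green roots (starting with the special one) from southwest to northeast, then blue roots from left to right. Label the roots so that each root label has as many elements as its tree has leaves (one for the special root), each root's label is $\succ$ the label of the preceding root, and the union of all root labels is $\{1,\dots,n+1\}$. Labels are then passed from the roots towards the leaves (southeastward) along branches, unchanged along branches; when a label $B$ reaches a branching vertex $v$ it is split as $B=C\cup D$ with $D\succ C$, each of the two outgoing branches getting a label of size equal to its number of leaves, according to: (I) if $v$ lies in a rhombus (tall or short), $D$ goes to the outgoing branch along the northwest-strip; (II) if $v$ lies in a square containing $\alpha$,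 $D$ goes to the branch leaving eastward and $C$ to the branch leaving southward; (III) if $v$ lies in a square containing $\beta$, $D$ goes to the branch leaving southward and $C$ to the branch leaving eastward. At completion every southeast boundary edge carries a singleton label. *)

theory Defs
  imports Main
begin

text \<open>Letters of a word in B_n^r: H, L and 0 (written Z).\<close>
datatype letter = H | L | Z

datatype sym = Emp | Alpha | Beta | Qt

fun rank :: "letter \<Rightarrow> nat" where
  "rank Z = 0" | "rank L = 1" | "rank H = 2"

definition Bnr :: "nat \<Rightarrow> nat \<Rightarrow> letter list set" where
  "Bnr n r = {X. length X = n \<and> count_list X L = r}"

text \<open>Tilings of Gamma(X) are encoded by flip sequences ws: starting from the southeast
boundary (the word X, strips named by their SE boundary position 0..n-1), the k-th tile is
added by swapping the adjacent letters at positions ws!k and ws!k+1 of the current boundary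
path (H0 -> 0H square, HL -> LH tall rhombus, L0 -> 0L short rhombus), until the northwest
boundary 0^l L^r H^k is reached.  arr X ws m is the list of strips (by current position) after
m tiles.\<close>

definition swap_adj :: "nat \<Rightarrow> nat list \<Rightarrow> nat list" where
  "swap_adj p xs = xs[p := xs ! Suc p, Suc p := xs ! p]"

definition arr :: "letter list \<Rightarrow> nat list \<Rightarrow> nat \<Rightarrow> nat list" where
  "arr X ws m = fold swap_adj (take m ws) [0..<length X]"

text \<open>The two strips crossing at tile k: tu has the larger letter (H over L over 0).\<close>
definition tu :: "letter list \<Rightarrow> nat list \<Rightarrow> nat \<Rightarrow> nat" where
  "tu X ws k = arr X ws k ! (ws ! k)"

definition tv :: "letter list \<Rightarrow> nat list \<Rightarrow> nat \<Rightarrow> nat" where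
  "tv X ws k = arr X ws k ! Suc (ws ! k)"

definition is_tiling :: "letter list \<Rightarrow> nat list \<Rightarrow> bool" where
  "is_tiling X ws \<longleftrightarrow>
     (\<forall>k<length ws. Suc (ws ! k) < length X \<and> rank (X ! tu X ws k) > rank (X ! tv X ws k)) \<and>
     map ((!) X) (arr X ws (length ws)) =
       replicate (count_list X Z) Z @ replicate (count_list X L) L @ replicate (count_list X H) H"

definition in_tile :: "letter list \<Rightarrow> nat list \<Rightarrow> nat \<Rightarrow> nat \<Rightarrow> bool" where
  "in_tile X ws s k \<longleftrightarrow> s = tu X ws k \<or> s = tv X ws k"

text \<open>Tiles of strip s, ordered from its SE boundary edge towards the NW boundary.\<close>
definition tiles :: "letter list \<Rightarrow> nat list \<Rightarrow> nat \<Rightarrow> nat list" where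
  "tiles X ws s = filter (in_tile X ws s) [0..<length ws]"

definition ntiles :: "letter list \<Rightarrow> nat list \<Rightarrow> nat \<Rightarrow> nat" where
  "ntiles X ws s = length (tiles X ws s)"

definition tidx :: "letter list \<Rightarrow> nat list \<Rightarrow> nat \<Rightarrow> nat \<Rightarrow> nat" where
  "tidx X ws s k = length (filter (in_tile X ws s) [0..<k])"

text \<open>Rhombic alternative tableaux.  The west-strip of a beta tile is its H strip tu,
the north-strip of an alpha tile is its 0 strip tv; "to the left"/"above" = later along the
strip.\<close>
definition forced_empty :: "letter list \<Rightarrow> nat list \<Rightarrow> (nat \<Rightarrow> sym) \<Rightarrow> nat \<Rightarrow> bool" where
  "forced_empty X ws f k \<longleftrightarrow>
     (\<exists>k'<k. f k' = Beta \<and> in_tile X ws (tu X ws k') k) \<or>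
     (\<exists>k'<k. f k' = Alpha \<and> in_tile X ws (tv X ws k') k)"

definition is_RAT :: "letter list \<Rightarrow> nat list \<Rightarrow> (nat \<Rightarrow> sym) \<Rightarrow> bool" where
  "is_RAT X ws f \<longleftrightarrow> (\<forall>k<length ws.
     (f k = Alpha \<longrightarrow> X ! tv X ws k = Z) \<and>
     (f k = Beta \<longrightarrow> X ! tu X ws k = H) \<and>
     (forced_empty X ws f k \<longrightarrow> f k = Emp) \<and>
     (\<not> forced_empty X ws f k \<longrightarrow> f k \<noteq> Emp))"

text \<open>Segments of strip lines: (s, j) is the piece of the line of strip s between its
(j-1)-th and j-th tile (j = 0: starts at the SE boundary edge; j = ntiles: ends at the NW
boundary edge).  Tile k erases the line of strip s beyond its centre if s is a north-strip
and k contains alpha, or s is a west-strip and k contains beta.\<close>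
definition erases :: "letter list \<Rightarrow> (nat \<Rightarrow> sym) \<Rightarrow> nat \<Rightarrow> nat \<Rightarrow> bool" where
  "erases X f s k \<longleftrightarrow> (X ! s = H \<and> f k = Beta) \<or> (X ! s = Z \<and> f k = Alpha)"

definition present :: "letter list \<Rightarrow> nat list \<Rightarrow> (nat \<Rightarrow> sym) \<Rightarrow> nat \<Rightarrow> nat \<Rightarrow> bool" where
  "present X ws f s j \<longleftrightarrow> j \<le> ntiles X ws s \<and>
     \<not> (\<exists>a<j. erases X f s (tiles X ws s ! a))"

definition other :: "letter list \<Rightarrow> nat list \<Rightarrow> nat \<Rightarrow> nat \<Rightarrow> nat" where
  "other X ws k s = (if s = tu X ws k then tv X ws k else tu X ws k)"

text \<open>Moving from a leaf towards its root.\<close>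
definition next_seg :: "letter list \<Rightarrow> nat list \<Rightarrow> (nat \<Rightarrow> sym) \<Rightarrow> nat \<times> nat \<Rightarrow> nat \<times> nat" where
  "next_seg X ws f \<sigma> = (let s = fst \<sigma>; j = snd \<sigma>; k = tiles X ws s ! j in
     if erases X f s k then (other X ws k s, Suc (tidx X ws (other X ws k s) k))
     else (s, Suc j))"

definition step_rel :: "letter list \<Rightarrow> nat list \<Rightarrow> (nat \<Rightarrow> sym) \<Rightarrow> ((nat \<times> nat) \<times> (nat \<times> nat)) set" where
  "step_rel X ws f = {(\<sigma>, next_seg X ws f \<sigma>) | \<sigma>. fst \<sigma> < length X \<and> snd \<sigma> < ntiles X ws (fst \<sigma>)}"

definition leafcount :: "letter list \<Rightarrow> nat list \<Rightarrow> (nat \<Rightarrow> sym) \<Rightarrow> nat \<times> nat \<Rightarrow> nat" where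
  "leafcount X ws f \<sigma> = card {i. i < length X \<and> ((i, 0), \<sigma>) \<in> (step_rel X ws f)\<^sup>*}"

definition is_root :: "letter list \<Rightarrow> nat list \<Rightarrow> (nat \<Rightarrow> sym) \<Rightarrow> nat \<Rightarrow> bool" where
  "is_root X ws f s \<longleftrightarrow> present X ws f s (ntiles X ws s)"

text \<open>Roots in the prescribed order: red (NW boundary south edges, top to bottom), the
special green root at Q (None), green (SW to NE), blue (left to right).\<close>
definition root_order :: "letter list \<Rightarrow> nat list \<Rightarrow> (nat \<Rightarrow> sym) \<Rightarrow> nat option list" where
  "root_order X ws f = (let \<pi> = arr X ws (length ws); l = count_list X Z; r = count_list X L;
       n = length X; rt = is_root X ws f; g = (\<lambda>p. \<pi> ! p) in
     map Some (filter rt (map g [l + r..<n])) @ [None] @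
     map Some (filter rt (map g (rev [l..<l + r]))) @
     map Some (filter rt (map g (rev [0..<l]))))"

definition root_size :: "letter list \<Rightarrow> nat list \<Rightarrow> (nat \<Rightarrow> sym) \<Rightarrow> nat option \<Rightarrow> nat" where
  "root_size X ws f ro = (case ro of None \<Rightarrow> 1 | Some s \<Rightarrow> leafcount X ws f (s, ntiles X ws s))"

definition is_label :: "nat set \<Rightarrow> bool" where
  "is_label J \<longleftrightarrow> (\<exists>a b. J = {a..b})"

definition succ_label :: "nat set \<Rightarrow> nat set \<Rightarrow> bool" where
  "succ_label D C \<longleftrightarrow> C \<noteq> {} \<and> D \<noteq> {} \<and> Min D = Max C + 1"

text \<open>Strip continuing past a branching tile (towards the root) and strip receiving D.\<close>
definition cont_strip :: "letter list \<Rightarrow> nat list \<Rightarrow> (nat \<Rightarrow> sym) \<Rightarrow> nat \<Rightarrow> nat" where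
  "cont_strip X ws f k = (if f k = Alpha then tu X ws k else tv X ws k)"

definition d_strip :: "letter list \<Rightarrow> nat list \<Rightarrow> (nat \<Rightarrow> sym) \<Rightarrow> nat \<Rightarrow> nat" where
  "d_strip X ws f k =
     (if X ! tu X ws k = H \<and> X ! tv X ws k = Z
      then (if f k = Alpha then tu X ws k else tv X ws k)
      else (if X ! tu X ws k = L then tu X ws k else tv X ws k))"

text \<open>lam is a run of the label-passing algorithm: lam (s,j) is the label carried by segment
(s,j); lam (s,0) is the final label of the SE boundary edge of strip s.\<close>
definition label_run :: "letter list \<Rightarrow> nat list \<Rightarrow> (nat \<Rightarrow> sym) \<Rightarrow> (nat \<times> nat \<Rightarrow> nat set) \<Rightarrow> bool" where
  "label_run X ws f lam \<longleftrightarrow>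
     (\<exists>Ls. length Ls = length (root_order X ws f) \<and>
        (\<forall>i<length Ls. is_label (Ls ! i) \<and> card (Ls ! i) = root_size X ws f (root_order X ws f ! i)) \<and>
        (\<forall>i. Suc i < length Ls \<longrightarrow> succ_label (Ls ! Suc i) (Ls ! i)) \<and>
        \<Union> (set Ls) = {1..length X + 1} \<and>
        (\<forall>i<length Ls. \<forall>s. root_order X ws f ! i = Some s \<longrightarrow> lam (s, ntiles X ws s) = Ls ! i)) \<and>
     (\<forall>s<length X. \<forall>j<ntiles X ws s. present X ws f s j \<and> f (tiles X ws s ! j) \<notin> {Alpha, Beta}
         \<longrightarrow> lam (s, j) = lam (s, Suc j)) \<and>
     (\<forall>k<length ws. f k \<in> {Alpha, Beta} \<and>
         present X ws f (cont_strip X ws f k) (Suc (tidx X ws (cont_strip X ws f k) k)) \<longrightarrow>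
        (let c = cont_strip X ws f k; ds = d_strip X ws f k; cs = other X ws k ds;
             Dseg = (ds, tidx X ws ds k); Cseg = (cs, tidx X ws cs k) in
         lam Dseg \<union> lam Cseg = lam (c, Suc (tidx X ws c k)) \<and>
         card (lam Dseg) = leafcount X ws f Dseg \<and>
         card (lam Cseg) = leafcount X ws f Cseg \<and>
         succ_label (lam Dseg) (lam Cseg)))"

end

theory Submission
  imports Defs "HOL-Library.Multiset"
begin

lemma tidx_tiles:
  assumes "in_tile X ws s k" "k < length ws"
  shows "tidx X ws s k < ntiles X ws s \<and> tiles X ws s ! tidx X ws s k = k"
proof -
  have e: "[0..<length ws] = [0..<k] @ k # [Suc k..<length ws]"
    using assms(2) by (metis le0 less_imp_le_nat le_add_diff_inverse upt_add_eq_append upt_conv_Cons)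
  show ?thesis unfolding tiles_def ntiles_def tidx_def by (simp add: e nth_append assms(1))
qed

lemma tiles_nth:
  assumes "j < ntiles X ws s"
  shows "tiles X ws s ! j < length ws \<and> in_tile X ws s (tiles X ws s ! j) \<and> tidx X ws s (tiles X ws s ! j) = j"
proof -
  have m: "tiles X ws s ! j \<in> set (tiles X ws s)" using assms by (simp add: ntiles_def)
  hence a: "tiles X ws s ! j < length ws" "in_tile X ws s (tiles X ws s ! j)" by (auto simp: tiles_def)
  have d: "distinct (tiles X ws s)" by (simp add: tiles_def)
  from tidx_tiles[OF a(2) a(1)] have "tiles X ws s ! tidx X ws s (tiles X ws s ! j) = tiles X ws s ! j"
    "tidx X ws s (tiles X ws s ! j) < length (tiles X ws s)" by (auto simp: ntiles_def)
  with d assms have "tidx X ws s (tiles X ws s ! j) = j" by (simp add: nth_eq_iff_index_eq ntiles_def)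
  with a show ?thesis by simp
qed

lemma tiles_mono:
  assumes "a < b" "b < ntiles X ws s"
  shows "tiles X ws s ! a < tiles X ws s ! b"
proof -
  have "sorted_wrt (<) (tiles X ws s)" unfolding tiles_def by (rule sorted_wrt_filter) simp
  thus ?thesis using assms sorted_wrt_nth_less by (fastforce simp: ntiles_def)
qed

lemma fold_swap:
  "\<forall>p\<in>set ps. Suc p < length xs \<Longrightarrow> length (fold swap_adj ps xs) = length xs \<and> set (fold swap_adj ps xs) = set xs"
proof (induction ps arbitrary: xs)
  case Nil then show ?case by simp
next
  case (Cons p ps)
  have p: "Suc p < length xs" using Cons.prems by simp
  have l: "length (swap_adj p xs) = length xs" by (simp add: swap_adj_def)
  have "mset (swap_adj p xs) = mset xs" unfolding swap_adj_def using p by (intro mset_swap) auto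
  hence s: "set (swap_adj p xs) = set xs" by (metis set_mset_mset)
  have "length (fold swap_adj ps (swap_adj p xs)) = length (swap_adj p xs) \<and>
        set (fold swap_adj ps (swap_adj p xs)) = set (swap_adj p xs)"
    using Cons.prems l by (intro Cons.IH) auto
  then show ?case using l s by simp
qed

lemma chain_eq:
  assumes "\<And>j. lo \<le> j \<Longrightarrow> j < hi \<Longrightarrow> g j = g (Suc j)" "lo \<le> hi"
  shows "g lo = g hi"
  using assms
proof (induction hi)
  case 0 then show ?case by simp
next
  case (Suc hi)
  show ?case
  proof (cases "lo = Suc hi")
    case True then show ?thesis by simp
  next
    case False
    then have "g lo = g hi" using Suc by auto
    also have "\<dots> = g (Suc hi)" using Suc False by auto
    finally show ?thesis .
  qed
qed

lemma step_rel_iff: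
  "(x, y) \<in> step_rel X ws f \<longleftrightarrow> y = next_seg X ws f x \<and> fst x < length X \<and> snd x < ntiles X ws (fst x)"
  by (cases x) (auto simp: step_rel_def)

lemma reach_chain:
  assumes "w < length X" "m \<le> ntiles X ws w" "\<forall>j<m. \<not> erases X f w (tiles X ws w ! j)"
  shows "((w, 0), (w, m)) \<in> (step_rel X ws f)\<^sup>*"
  using assms(2,3)
proof (induction m)
  case 0 then show ?case by simp
next
  case (Suc m)
  have a: "((w, 0), (w, m)) \<in> (step_rel X ws f)\<^sup>*" using Suc by auto
  have "((w, m), (w, Suc m)) \<in> step_rel X ws f"
    using Suc.prems assms(1) by (simp add: step_rel_iff next_seg_def Let_def)
  with a show ?case by (rule rtrancl_into_rtrancl)
qed

lemma leafcount_pos: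
  assumes "w < length X" "m \<le> ntiles X ws w" "\<forall>j<m. \<not> erases X f w (tiles X ws w ! j)"
  shows "leafcount X ws f (w, m) \<ge> 1"
proof -
  have "w \<in> {i. i < length X \<and> ((i, 0), (w, m)) \<in> (step_rel X ws f)\<^sup>*}"
    using reach_chain[OF assms] assms(1) by simp
  moreover have "finite {i. i < length X \<and> ((i, 0), (w, m)) \<in> (step_rel X ws f)\<^sup>*}" by simp
  ultimately show ?thesis unfolding leafcount_def
    by (metis (no_types, lifting) One_nat_def Suc_leI card_gt_0_iff empty_iff)
qed

lemma leafcount_one:
  assumes "w < length X" "m \<le> ntiles X ws w" "\<forall>j<m. f (tiles X ws w ! j) \<notin> {Alpha, Beta}"
  shows "leafcount X ws f (w, m) = 1"
proof -
  have ne: "\<forall>j<m. \<not> erases X f w (tiles X ws w ! j)" using assms(3) by (auto simp: erases_def)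
  have bk: "\<exists>j\<le>m. sg = (w, j)" if "(sg, (w, m)) \<in> (step_rel X ws f)\<^sup>*" for sg
    using that
  proof (induction rule: converse_rtrancl_induct)
    case base then show ?case by auto
  next
    case (step x y)
    from step.IH obtain j where j: "j \<le> m" "y = (w, j)" by blast
    obtain s i where x: "x = (s, i)" by force
    from step.hyps(1) have y: "y = next_seg X ws f (s, i)" "s < length X" "i < ntiles X ws s"
      by (auto simp: step_rel_iff x)
    define k where "k = tiles X ws s ! i"
    have k: "k < length ws" "in_tile X ws s k" using tiles_nth[OF y(3)] k_def by auto
    show ?case
    proof (cases "erases X f s k")
      case True
      then have "(other X ws k s, Suc (tidx X ws (other X ws k s) k)) = (w, j)"
        using y j by (simp add: next_seg_def Let_def k_def)
      hence o: "other X ws k s = w" "Suc (tidx X ws w k) = j" by auto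
      have "in_tile X ws w k" using o(1) by (auto simp: other_def in_tile_def)
      from tidx_tiles[OF this k(1)] have "tidx X ws w k < m" "tiles X ws w ! tidx X ws w k = k"
        using o j by auto
      hence "f k \<notin> {Alpha, Beta}" using assms(3) by metis
      with True show ?thesis by (auto simp: erases_def)
    next
      case False
      then have "(s, Suc i) = (w, j)" using y j by (simp add: next_seg_def Let_def k_def)
      then show ?thesis using x j by auto
    qed
  qed
  have "{i. i < length X \<and> ((i, 0), (w, m)) \<in> (step_rel X ws f)\<^sup>*} = {w}"
    using bk reach_chain[OF assms(1,2) ne] assms(1) by fastforce
  thus ?thesis by (simp add: leafcount_def)
qed

theorem lemma3p9:
  fixes X :: "letter list" and n r :: nat and ws :: "nat list" and f :: "nat \<Rightarrow> sym"
    and lam :: "nat \<times> nat \<Rightarrow> nat set" and w t :: nat and J :: "nat set"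
  assumes "X \<in> Bnr n r"
    and "is_tiling X ws"
    and "is_RAT X ws f"
    and "label_run X ws f lam"
    and "w < length X" and "X ! w = H"
    and "t < length ws" and "in_tile X ws w t"
    and "\<forall>t'<t. in_tile X ws w t' \<longrightarrow> f t' \<noteq> Beta"
    and "J = lam (w, tidx X ws w t)"
  shows "lam (w, 0) = {Max J}"
proof -
  define N where "N = ntiles X ws w"
  define kk where "kk = (\<lambda>j. tiles X ws w ! j)"
  define p0 where "p0 = tidx X ws w t"
  have p0: "p0 < N" "kk p0 = t" using tidx_tiles[OF assms(8) assms(7)] p0_def N_def kk_def by auto
  have kinfo: "kk j < length ws \<and> in_tile X ws w (kk j) \<and> tidx X ws w (kk j) = j" if "j < N" for j
    using tiles_nth that N_def kk_def by blast
  have below: "f (kk j) \<noteq> Beta" if "j < p0" for j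
  proof -
    have "kk j < t" using tiles_mono[of j p0 X ws w] that p0 by (simp add: kk_def N_def)
    thus ?thesis using assms(9) kinfo[of j] that p0 by auto
  qed
  have RAT: "\<And>k. k < length ws \<Longrightarrow> (f k = Alpha \<longrightarrow> X ! tv X ws k = Z) \<and>
     (f k = Beta \<longrightarrow> X ! tu X ws k = H) \<and>
     (forced_empty X ws f k \<longrightarrow> f k = Emp) \<and>
     (\<not> forced_empty X ws f k \<longrightarrow> f k \<noteq> Emp)" using assms(3) unfolding is_RAT_def by blast
  have rank: "\<And>k. k < length ws \<Longrightarrow> rank (X ! tu X ws k) > rank (X ! tv X ws k)"
    using assms(2) unfolding is_tiling_def by blast
  obtain Ls where Ls: "length Ls = length (root_order X ws f)"
    "\<forall>i<length Ls. is_label (Ls ! i) \<and> card (Ls ! i) = root_size X ws f (root_order X ws f ! i)"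
    "\<forall>i<length Ls. \<forall>s. root_order X ws f ! i = Some s \<longrightarrow> lam (s, ntiles X ws s) = Ls ! i"
    using assms(4) unfolding label_run_def by blast
  have eqs: "\<forall>s<length X. \<forall>j<ntiles X ws s. present X ws f s j \<and> f (tiles X ws s ! j) \<notin> {Alpha, Beta}
         \<longrightarrow> lam (s, j) = lam (s, Suc j)"
    using assms(4) unfolding label_run_def by blast
  have br: "\<forall>k<length ws. f k \<in> {Alpha, Beta} \<and>
         present X ws f (cont_strip X ws f k) (Suc (tidx X ws (cont_strip X ws f k) k)) \<longrightarrow>
        (let c = cont_strip X ws f k; ds = d_strip X ws f k; cs = other X ws k ds;
             Dseg = (ds, tidx X ws ds k); Cseg = (cs, tidx X ws cs k) in
         lam Dseg \<union> lam Cseg = lam (c, Suc (tidx X ws c k)) \<and>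
         card (lam Dseg) = leafcount X ws f Dseg \<and>
         card (lam Cseg) = leafcount X ws f Cseg \<and>
         succ_label (lam Dseg) (lam Cseg))"
    using assms(4) unfolding label_run_def by blast
  have erasesw: "\<And>k. erases X f w k \<longleftrightarrow> f k = Beta" using assms(6) by (simp add: erases_def)
  have pres: "present X ws f w j" if "j \<le> N" "\<forall>i<j. f (kk i) \<noteq> Beta" for j
    using that by (auto simp: present_def erasesw N_def kk_def)
  have eqstep: "lam (w, j) = lam (w, Suc j)" if "j < N" "\<forall>i<j. f (kk i) \<noteq> Beta" "f (kk j) \<notin> {Alpha, Beta}" for j
    using eqs assms(5) that pres[of j] by (auto simp: N_def kk_def)
  have alpha: "\<exists>C. lam (w, j) \<union> C = lam (w, Suc j) \<and> card (lam (w, j)) = leafcount X ws f (w, j)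
      \<and> succ_label (lam (w, j)) C"
    if "j < N" "f (kk j) = Alpha" "\<forall>i\<le>j. f (kk i) \<noteq> Beta" for j
  proof -
    define k where "k = kk j"
    have k: "k < length ws" "in_tile X ws w k" "tidx X ws w k = j" using kinfo[OF that(1)] k_def by auto
    have z: "X ! tv X ws k = Z" using RAT[OF k(1)] that(2) k_def by auto
    have wu: "w = tu X ws k" using k(2) z assms(6) by (auto simp: in_tile_def)
    have c: "cont_strip X ws f k = w" using wu that(2) k_def by (simp add: cont_strip_def)
    have d: "d_strip X ws f k = w" using wu that(2) k_def z assms(6) by (simp add: d_strip_def)
    have o: "other X ws k w = tv X ws k" using wu by (simp add: other_def)
    have pr: "present X ws f w (Suc j)" using pres[of "Suc j"] that by (auto simp: less_Suc_eq_le)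
    have pre: "f k \<in> {Alpha, Beta} \<and> present X ws f (cont_strip X ws f k) (Suc (tidx X ws (cont_strip X ws f k) k))"
      using that(2) k_def pr c k(3) by simp
    note L = br[rule_format, OF k(1) pre]
    from L have "lam (w, j) \<union> lam (tv X ws k, tidx X ws (tv X ws k) k) = lam (w, Suc j) \<and>
       card (lam (w, j)) = leafcount X ws f (w, j) \<and> succ_label (lam (w, j)) (lam (tv X ws k, tidx X ws (tv X ws k) k))"
      unfolding Let_def c d o k(3) by simp
    thus ?thesis by blast
  qed
  have beta: "card (lam (w, j)) = leafcount X ws f (w, j)" if "j < N" "f (kk j) = Beta" for j
  proof -
    define k where "k = kk j"
    define u where "u = tu X ws k"
    define v where "v = tv X ws k"
    have k: "k < length ws" "in_tile X ws w k" "tidx X ws w k = j" using kinfo[OF that(1)] k_def by auto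
    have hu: "X ! u = H" using RAT[OF k(1)] that(2) k_def u_def by auto
    have rk: "rank (X ! u) > rank (X ! v)" using rank[OF k(1)] u_def v_def by simp
    have uv: "u \<noteq> v" using rk by auto
    have wu: "w = u" using k(2) hu rk assms(6) by (auto simp: in_tile_def u_def v_def)
    have c: "cont_strip X ws f k = v" using that(2) k_def by (simp add: cont_strip_def v_def)
    have d: "d_strip X ws f k = v" using that(2) k_def hu by (auto simp: d_strip_def v_def u_def)
    have o: "other X ws k v = w" using wu uv by (auto simp: other_def u_def v_def)
    have kv: "in_tile X ws v k" by (simp add: in_tile_def v_def)
    from tidx_tiles[OF kv k(1)] have tv1: "tidx X ws v k < ntiles X ws v" "tiles X ws v ! tidx X ws v k = k" by auto
    have pr: "present X ws f v (Suc (tidx X ws v k))"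
      unfolding present_def
    proof (intro conjI notI)
      show "Suc (tidx X ws v k) \<le> ntiles X ws v" using tv1 by simp
    next
      assume "\<exists>a<Suc (tidx X ws v k). erases X f v (tiles X ws v ! a)"
      then obtain a where a: "a < Suc (tidx X ws v k)" "erases X f v (tiles X ws v ! a)" by blast
      define k' where "k' = tiles X ws v ! a"
      have vz: "X ! v = Z" "f k' = Alpha" using a(2) rk hu k'_def by (auto simp: erases_def)
      have "a \<noteq> tidx X ws v k" using vz(2) tv1(2) that(2) k_def k'_def by auto
      hence alt: "a < tidx X ws v k" using a(1) by simp
      have kk': "k' < k" using tiles_mono[OF alt tv1(1)] tv1(2) k'_def by simp
      have k'i: "k' < length ws" "in_tile X ws v k'" using tiles_nth[of a X ws v] alt tv1(1) k'_def by auto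
      have z': "X ! tv X ws k' = Z" using RAT[OF k'i(1)] vz(2) by auto
      have r': "rank (X ! tu X ws k') > rank (X ! tv X ws k')" using rank[OF k'i(1)] .
      have "v = tv X ws k'" using k'i(2) vz(1) z' r' by (auto simp: in_tile_def)
      hence "forced_empty X ws f k" using kk' vz(2) kv unfolding forced_empty_def by auto
      hence "f k = Emp" using RAT[OF k(1)] by auto
      thus False using that(2) k_def by simp
    qed
    have pre: "f k \<in> {Alpha, Beta} \<and> present X ws f (cont_strip X ws f k) (Suc (tidx X ws (cont_strip X ws f k) k))"
      using that(2) k_def pr c by simp
    note L = br[rule_format, OF k(1) pre]
    from L show ?thesis unfolding Let_def c d o k(3) by simp
  qed
  define S where "S = {j. p0 \<le> j \<and> j < N \<and> f (kk j) \<in> {Alpha, Beta}}"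
  have up: "\<exists>m. p0 \<le> m \<and> m \<le> N \<and> lam (w, p0) = lam (w, m) \<and> card (lam (w, m)) = leafcount X ws f (w, m)
      \<and> (\<forall>j<m. f (kk j) \<noteq> Beta) \<and> (\<forall>j. p0 \<le> j \<longrightarrow> j < m \<longrightarrow> f (kk j) \<notin> {Alpha, Beta})"
  proof (cases "S = {}")
    case True
    have nb: "\<forall>j<N. f (kk j) \<noteq> Beta"
    proof (intro allI impI)
      fix j assume j: "j < N"
      show "f (kk j) \<noteq> Beta"
      proof (cases "j < p0")
        case True then show ?thesis using below by auto
      next
        case False then show ?thesis using \<open>S = {}\<close> j unfolding S_def by auto
      qed
    qed
    have ch: "lam (w, p0) = lam (w, N)"
      using chain_eq[where g = "\<lambda>j. lam (w, j)" and lo = p0 and hi = N] eqstep nb \<open>S = {}\<close> p0(1)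
      unfolding S_def by auto
    define pi where "pi = arr X ws (length ws)"
    have wsb: "\<forall>p\<in>set (take (length ws) ws). Suc p < length [0..<length X]"
      using assms(2) unfolding is_tiling_def by (auto simp: in_set_conv_nth)
    from fold_swap[OF wsb] have pil: "length pi = length X" "set pi = {0..<length X}"
      unfolding pi_def arr_def by auto
    have mp: "map ((!) X) pi = replicate (count_list X Z) Z @ replicate (count_list X L) L @ replicate (count_list X H) H"
      using assms(2) unfolding is_tiling_def pi_def by blast
    obtain p where p: "p < length pi" "pi ! p = w" using pil assms(5) by (metis atLeastLessThan_iff in_set_conv_nth le0)
    have xp: "X ! w = (replicate (count_list X Z) Z @ replicate (count_list X L) L @ replicate (count_list X H) H) ! p"
      using p by (metis mp nth_map)
    have pge: "\<not> p < count_list X Z + count_list X L"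
    proof
      assume pl: "p < count_list X Z + count_list X L"
      show False
      proof (cases "p < count_list X Z")
        case True then show ?thesis using xp assms(6) by (simp add: nth_append)
      next
        case False
        hence "p - count_list X Z < count_list X L" using pl by arith
        then show ?thesis using xp assms(6) False by (simp add: nth_append)
      qed
    qed
    have isr: "is_root X ws f w" unfolding is_root_def N_def[symmetric] using pres nb by auto
    have "w \<in> set (filter (is_root X ws f) (map (\<lambda>p. pi ! p) [count_list X Z + count_list X L..<length X]))"
      using p pge pil isr by (auto simp: image_iff intro!: bexI[of _ p])
    hence "Some w \<in> set (root_order X ws f)" unfolding root_order_def Let_def pi_def[symmetric] by auto
    then obtain i where i: "i < length (root_order X ws f)" "root_order X ws f ! i = Some w"
      by (metis in_set_conv_nth)
    have "card (lam (w, N)) = leafcount X ws f (w, N)"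
      using Ls i by (auto simp: root_size_def N_def)
    then show ?thesis using ch p0 nb True unfolding S_def by (intro exI[of _ N]) auto
  next
    case False
    define m where "m = Min S"
    have fin: "finite S" unfolding S_def by simp
    have mS: "m \<in> S" using Min_in[OF fin False] m_def by simp
    have mmin: "\<And>j. j \<in> S \<Longrightarrow> m \<le> j" using Min_le[OF fin] m_def by simp
    have mi: "p0 \<le> m" "m < N" "f (kk m) \<in> {Alpha, Beta}" using mS unfolding S_def by auto
    have btw: "\<forall>j. p0 \<le> j \<longrightarrow> j < m \<longrightarrow> f (kk j) \<notin> {Alpha, Beta}"
      using mmin mi unfolding S_def by force
    have nb: "\<forall>j<m. f (kk j) \<noteq> Beta"
      using btw below by (metis insertCI not_le)
    have ch: "lam (w, p0) = lam (w, m)"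
      using chain_eq[where g = "\<lambda>j. lam (w, j)" and lo = p0 and hi = m] eqstep nb btw mi by auto
    have "card (lam (w, m)) = leafcount X ws f (w, m)"
    proof (cases "f (kk m) = Alpha")
      case True
      have "\<forall>i\<le>m. f (kk i) \<noteq> Beta" using nb True by (metis le_neq_implies_less sym.distinct)
      then show ?thesis using alpha[OF mi(2) True] by blast
    next
      case False
      then show ?thesis using beta[OF mi(2)] mi(3) by auto
    qed
    then show ?thesis using mi btw nb ch by (intro exI[of _ m]) auto
  qed
  then obtain m where m: "p0 \<le> m" "m \<le> N" "lam (w, p0) = lam (w, m)" "card (lam (w, m)) = leafcount X ws f (w, m)"
      "\<forall>j<m. f (kk j) \<noteq> Beta" "\<forall>j. p0 \<le> j \<longrightarrow> j < m \<longrightarrow> f (kk j) \<notin> {Alpha, Beta}" by blast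
  have J: "J = lam (w, p0)" using assms(10) p0_def by simp
  have "leafcount X ws f (w, m) \<ge> 1"
    using leafcount_pos[OF assms(5), of m ws f] m(2,5) erasesw by (auto simp: N_def kk_def)
  hence Jf: "finite J" "J \<noteq> {}" using J m(3,4) by (auto simp: card_ge_0_finite)
  have down: "finite (lam (w, p0 - d)) \<and> lam (w, p0 - d) \<noteq> {} \<and> Max (lam (w, p0 - d)) = Max J" if "d \<le> p0" for d
    using that
  proof (induction d)
    case 0 then show ?case using Jf J by simp
  next
    case (Suc d)
    define j where "j = p0 - Suc d"
    have sj: "Suc j = p0 - d" "j < p0" using Suc.prems j_def by auto
    have IH: "finite (lam (w, Suc j)) \<and> lam (w, Suc j) \<noteq> {} \<and> Max (lam (w, Suc j)) = Max J"
      using Suc sj by simp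
    have jN: "j < N" using sj p0 by simp
    have nbj: "\<forall>i\<le>j. f (kk i) \<noteq> Beta" using below sj by simp
    show ?case
    proof (cases "f (kk j) = Alpha")
      case True
      obtain C where C: "lam (w, j) \<union> C = lam (w, Suc j)" "succ_label (lam (w, j)) C"
        using alpha[OF jN True nbj] by blast
      have fD: "finite (lam (w, j))" "finite C" using C(1) IH by (metis finite_Un)+
      have ne: "lam (w, j) \<noteq> {}" "C \<noteq> {}" "Min (lam (w, j)) = Max C + 1" using C(2) by (auto simp: succ_label_def)
      have "Min (lam (w, j)) \<le> Max (lam (w, j))" using ne fD by (meson Max_ge Min_in)
      hence "Max C < Max (lam (w, j))" using ne by simp
      hence "Max (lam (w, Suc j)) = Max (lam (w, j))" using C(1) Max_Un[OF fD(1) ne(1) fD(2) ne(2)] by simp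
      then show ?thesis using IH fD ne j_def by simp
    next
      case False
      have "lam (w, j) = lam (w, Suc j)" using eqstep[OF jN] nbj False below by auto
      then show ?thesis using IH j_def by simp
    qed
  qed
  have c1: "card (lam (w, 0)) = 1"
  proof (cases "\<exists>j<p0. f (kk j) = Alpha")
    case True
    define a where "a = (LEAST j. j < p0 \<and> f (kk j) = Alpha)"
    have a: "a < p0" "f (kk a) = Alpha" using LeastI_ex[OF True] a_def by auto
    have amin: "f (kk j) \<noteq> Alpha" if "j < a" for j
      using not_less_Least[of j "\<lambda>j. j < p0 \<and> f (kk j) = Alpha"] that a(1) a_def by auto
    have nba: "\<forall>j<a. f (kk j) \<notin> {Alpha, Beta}" using amin below a by auto
    have "lam (w, 0) = lam (w, a)"
      using chain_eq[where g = "\<lambda>j. lam (w, j)" and lo = 0 and hi = a] eqstep nba a p0 below by auto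
    moreover have "card (lam (w, a)) = leafcount X ws f (w, a)"
    proof -
      have aN: "a < N" using a p0 by simp
      have "\<forall>i\<le>a. f (kk i) \<noteq> Beta" using below a(1) by auto
      then show ?thesis using alpha[OF aN a(2)] by blast
    qed
    moreover have "leafcount X ws f (w, a) = 1"
      using leafcount_one[OF assms(5), of a ws f] nba a p0 by (simp add: N_def kk_def)
    ultimately show ?thesis by simp
  next
    case False
    have nba: "\<forall>j<m. f (kk j) \<notin> {Alpha, Beta}"
    proof (intro allI impI)
      fix j assume j: "j < m"
      show "f (kk j) \<notin> {Alpha, Beta}"
      proof (cases "j < p0")
        case True then show ?thesis using False below by auto
      next
        case nj: False then show ?thesis using m(6) j by auto
      qed
    qed
    have "lam (w, 0) = lam (w, p0)"
      using chain_eq[where g = "\<lambda>j. lam (w, j)" and lo = 0 and hi = p0] eqstep nba m p0 below by auto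
    moreover have "leafcount X ws f (w, m) = 1"
      using leafcount_one[OF assms(5), of m ws f] nba m(2) by (simp add: N_def kk_def)
    ultimately show ?thesis using m(3,4) by simp
  qed
  then obtain x where x: "lam (w, 0) = {x}" by (metis card_1_singletonE)
  have "Max (lam (w, 0)) = Max J" using down[of p0] by simp
  with x show ?thesis by simp
qed

end
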